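(* Let $G$ be a $3$-dimensional Lie group with Lie algebra $\mathfrak g$ and $(\mathcal G,\mathcal F)$ a left-invariant $B_3$-generalized pseudo-Kähler structure on a left-invariant Courant algebroid $E_{H,F}$ of type $B_3$ over $G$, with components $(g,J_+,J_-,X_+,X_-)$ where $g$ is positive definite. Then $H=0$, $F=0$, $J_\pm$ are $g$-skew-symmetric with $J_\pm X_\pm=0$ and complex structures on $X_\pm^\perp$, and, after replacing $(g,J_+,J_-,X_+,X_-)$ by $(\mu^2g,J_+,J_-,\mu^{-1}X_+,\mu^{-1}X_-)$ for a suitable $\mu\in\mathbb R\setminus\{0\}$, one of the following holds: (i) there is a $g$-orthonormal basis $\{w_1,w_2,w_3\}$ of $\mathfrak g$ with $[w_1,w_2]=w_3$, $[w_2,w_3]=w_1$, $[w_3,w_1]=0$, and $X_-=w_2$, $X_+=\pm X_-$; (ii) there is a $g$-orthogonal basis $\{w_1,w_2,w_3\}$ with $[w_1,w_2]=w_2$, $[w_1,w_3]=[w_2,w_3]=0$, $g(w_1,w_1)=1/\delta^2$, $g(w_2,w_2)=g(w_3,w_3)=1$ for some $\delta\in\mathbb R\setminus\{0\}$, and $X_-=w_3$, $X_+=\pm X_-$; (iii) $\mathfrak g$ is abelian, $g$ is any Riemannian metric and $X_\pm$ are arbitrary unit vectors.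
   Context: For a closed $2$-form $F$ and a $3$-form $H$ on a manifold $M$ of dimension $n$ with $dH=-F\wedge F$, $E_{H,F}$ is $TM\oplus T^*M\oplus\mathbb R$ with scalar product $\langle X+\xi+\lambda,Y+\eta+\mu\rangle=\tfrac12(\eta(X)+\xi(Y))+\lambda\mu$, anchor the projection to $TM$, and Dorfman bracket $[X+\xi+\lambda,Y+\eta+\mu]=\mathcal L_XY+\mathcal L_X\eta-i_Yd\xi+2\mu\,d\lambda+i_Xi_YH-2(\mu\,i_XF-\lambda\,i_YF)+X(\mu)-Y(\lambda)+F(X,Y)$. A $B_n$-generalized almost pseudo-Hermitian structure $(\mathcal G,\mathcal F)$ consists of a generalized metric (rank $n$ subbundle $E_-$, nondegenerate for the scalar product, projecting isomorphically to $TM$, $\mathcal G^{\mathrm{end}}=\pm\mathrm{Id}$ on $E_\pm$, $E_+=E_-^\perp$) and an endomorphism $\mathcal F$ commuting with $\mathcal G^{\mathrm{end}}$ whose $i$-eigenbundle $L\subset E\otimes\mathbb C$ is isotropic of rank $n$ with $L\cap\bar L=0$, $-i$-eigenbundle $\bar L$ and kernel $(L\oplus\bar L)^\perp$. It is $B_n$-generalized pseudo-Kähler if the $i$-eigenbundles of $\mathcal F$ and $\mathcal G^{\mathrm{end}}\mathcal F$ have spaces of sections closed under the Dorfman bracket. Components ($n$ odd): data $(g,J_+,J_-,X_+,X_-)$ with $g$ pseudo-Riemannian, $J_\pm$ $g$-skew-symmetric, $g(X_\pm,X_\pm)=1$, $J_\pm X_\pm=0$, $J_\pm|_{X_\pm^\perp}$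 complex structures; the structure with these components has $E_-=\{X-g(X,\cdot)\}$ and $\mathcal F(X+\xi+\lambda)=[\tfrac12(J_++J_-)X+\tfrac12(J_+-J_-)\xi^\sharp+\lambda X_+]+[\tfrac12g((J_+-J_-)X,\cdot)-\tfrac12\xi\circ(J_++J_-)+\lambda g(X_+,\cdot)]+[-\tfrac12g(X_+,X)-\tfrac12\xi(X_+)]$. Left-invariance: $E_{H,F}$ is left-invariant if $H,F$ are left-invariant; a structure is left-invariant if it is given by left-invariant components, identified with tensors on $\mathfrak g$. The rescaling (replacing $g,X_\pm$ as stated) maps a $B_3$-generalized pseudo-Kähler structure on $E_{H,F}$ to one on $E_{\mu^2H,\mu F}$. *)

theory Defs
  imports "HOL-Analysis.Analysis"
begin

text \<open>Everything is left-invariant, hence identified with linear-algebraic data on the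
Lie algebra g = real^3 (a basis of left-invariant vector fields identifies g with real^3).
Covectors on g are represented by their component vectors: xi(X) = xi \<bullet> X.
A metric g is represented by its symmetric Gram matrix G: g(X,Y) = X \<bullet> (G *v Y);
endomorphisms J by matrices.\<close>

type_synonym vec3 = "real^3"
type_synonym mat3 = "real^3^3"
text \<open>Left-invariant sections of E = TM + T*M + R: triples (X, xi, lambda).\<close>
type_synonym sec = "vec3 \<times> vec3 \<times> real"

definition lie_algebra :: "(vec3 \<Rightarrow> vec3 \<Rightarrow> vec3) \<Rightarrow> bool" where
  "lie_algebra br \<longleftrightarrow> bilinear br \<and> (\<forall>x. br x x = 0) \<and>
     (\<forall>x y z. br x (br y z) + br y (br z x) + br z (br x y) = 0)"

definition abelian :: "(vec3 \<Rightarrow> vec3 \<Rightarrow> vec3) \<Rightarrow> bool" where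
  "abelian br \<longleftrightarrow> (\<forall>x y. br x y = 0)"

definition covec :: "(vec3 \<Rightarrow> real) \<Rightarrow> vec3" where
  "covec f = (\<chi> k. f (axis k 1))"

definition trilinear :: "(vec3 \<Rightarrow> vec3 \<Rightarrow> vec3 \<Rightarrow> real) \<Rightarrow> bool" where
  "trilinear H \<longleftrightarrow> (\<forall>y z. linear (\<lambda>x. H x y z)) \<and> (\<forall>x z. linear (\<lambda>y. H x y z))
      \<and> (\<forall>x y. linear (\<lambda>z. H x y z))"

definition three_form :: "(vec3 \<Rightarrow> vec3 \<Rightarrow> vec3 \<Rightarrow> real) \<Rightarrow> bool" where
  "three_form H \<longleftrightarrow> trilinear H \<and> (\<forall>x y z. H x y z = - H y x z) \<and>
      (\<forall>x y z. H x y z = - H x z y)"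

definition two_form :: "(vec3 \<Rightarrow> vec3 \<Rightarrow> real) \<Rightarrow> bool" where
  "two_form F \<longleftrightarrow> bilinear F \<and> (\<forall>x y. F x y = - F y x)"

text \<open>Exterior derivative of left-invariant forms (Chevalley-Eilenberg formula).\<close>
definition d2 :: "(vec3 \<Rightarrow> vec3 \<Rightarrow> vec3) \<Rightarrow> (vec3 \<Rightarrow> vec3 \<Rightarrow> real) \<Rightarrow> vec3 \<Rightarrow> vec3 \<Rightarrow> vec3 \<Rightarrow> real" where
  "d2 br F x y z = - F (br x y) z + F (br x z) y - F (br y z) x"

definition d3 :: "(vec3 \<Rightarrow> vec3 \<Rightarrow> vec3) \<Rightarrow> (vec3 \<Rightarrow> vec3 \<Rightarrow> vec3 \<Rightarrow> real)
     \<Rightarrow> vec3 \<Rightarrow> vec3 \<Rightarrow> vec3 \<Rightarrow> vec3 \<Rightarrow> real" where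
  "d3 br H a b c e = - H (br a b) c e + H (br a c) b e - H (br a e) b c
                     - H (br b c) a e + H (br b e) a c - H (br c e) a b"

definition wedgeFF :: "(vec3 \<Rightarrow> vec3 \<Rightarrow> real) \<Rightarrow> vec3 \<Rightarrow> vec3 \<Rightarrow> vec3 \<Rightarrow> vec3 \<Rightarrow> real" where
  "wedgeFF F a b c e = 2 * (F a b * F c e - F a c * F b e + F a e * F b c)"

text \<open>Admissible data (H,F) for the Courant algebroid E_{H,F}: F closed, dH = - F ^ F.\<close>
definition courant_data :: "(vec3 \<Rightarrow> vec3 \<Rightarrow> vec3) \<Rightarrow> (vec3 \<Rightarrow> vec3 \<Rightarrow> vec3 \<Rightarrow> real)
     \<Rightarrow> (vec3 \<Rightarrow> vec3 \<Rightarrow> real) \<Rightarrow> bool" where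
  "courant_data br H F \<longleftrightarrow> three_form H \<and> two_form F \<and>
     (\<forall>x y z. d2 br F x y z = 0) \<and>
     (\<forall>a b c e. d3 br H a b c e = - wedgeFF F a b c e)"

text \<open>Dorfman bracket of left-invariant sections of E_{H,F}
  (derivatives of constant functions vanish, d lambda = 0,
   (L_X eta)(Z) = - eta([X,Z]),  (i_Y d xi)(Z) = - xi([Y,Z]),  i_X i_Y H = H(Y,X,.)).\<close>
definition dorfman :: "(vec3 \<Rightarrow> vec3 \<Rightarrow> vec3) \<Rightarrow> (vec3 \<Rightarrow> vec3 \<Rightarrow> vec3 \<Rightarrow> real)
     \<Rightarrow> (vec3 \<Rightarrow> vec3 \<Rightarrow> real) \<Rightarrow> sec \<Rightarrow> sec \<Rightarrow> sec" where
  "dorfman br H F u v = (case u of (X, xi, lam) \<Rightarrow> case v of (Y, eta, mu) \<Rightarrow>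
     (br X Y,
      covec (\<lambda>Z. - (eta \<bullet> br X Z) + xi \<bullet> br Y Z + H Y X Z
                  - 2 * (mu * F X Z - lam * F Y Z)),
      F X Y))"

definition gmet :: "mat3 \<Rightarrow> vec3 \<Rightarrow> vec3 \<Rightarrow> real" where
  "gmet G x y = x \<bullet> (G *v y)"

definition component_data :: "mat3 \<Rightarrow> mat3 \<Rightarrow> mat3 \<Rightarrow> vec3 \<Rightarrow> vec3 \<Rightarrow> bool" where
  "component_data G Jp Jm Xp Xm \<longleftrightarrow>
     transpose G = G \<and> invertible G \<and>
     (\<forall>J\<in>{Jp, Jm}. \<forall>x y. gmet G (J *v x) y = - gmet G x (J *v y)) \<and>
     gmet G Xp Xp = 1 \<and> gmet G Xm Xm = 1 \<and> Jp *v Xp = 0 \<and> Jm *v Xm = 0 \<and>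
     (\<forall>y. gmet G Xp y = 0 \<longrightarrow> Jp *v (Jp *v y) = - y) \<and>
     (\<forall>y. gmet G Xm y = 0 \<longrightarrow> Jm *v (Jm *v y) = - y)"

definition pos_def :: "mat3 \<Rightarrow> bool" where
  "pos_def G \<longleftrightarrow> (\<forall>x. x \<noteq> 0 \<longrightarrow> gmet G x x > 0)"

text \<open>The endomorphism F of the structure with components (g,J+,J-,X+,X-).
  g(X,.) has component vector G *v X, xi^sharp = G^-1 xi, xi o J = J^T xi.\<close>
definition Fend :: "mat3 \<Rightarrow> mat3 \<Rightarrow> mat3 \<Rightarrow> vec3 \<Rightarrow> sec \<Rightarrow> sec" where
  "Fend G Jp Jm Xp u = (case u of (X, xi, lam) \<Rightarrow>
     ((1/2) *\<^sub>R ((Jp + Jm) *v X) + (1/2) *\<^sub>R ((Jp - Jm) *v (matrix_inv G *v xi)) + lam *\<^sub>R Xp,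
      (1/2) *\<^sub>R (G *v ((Jp - Jm) *v X)) - (1/2) *\<^sub>R (transpose (Jp + Jm) *v xi) + lam *\<^sub>R (G *v Xp),
      - (1/2) * gmet G Xp X - (1/2) * (xi \<bullet> Xp)))"

text \<open>G^end of the generalized metric with E_- = {X - g(X,.)}: it is -Id on E_-
  and Id on E_+ = E_-^perp = {X + g(X,.) + lambda}; explicitly
  G^end(X + xi + lambda) = xi^sharp + g(X,.) + lambda.\<close>
definition Gend :: "mat3 \<Rightarrow> sec \<Rightarrow> sec" where
  "Gend G u = (case u of (X, xi, lam) \<Rightarrow> (matrix_inv G *v xi, G *v X, lam))"

text \<open>The i-eigenspace of the complexification of a real endomorphism T consists of
  u1 + i u2 with T u1 = - u2, T u2 = u1. Closure under the (complex-bilinearly extended)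
  Dorfman bracket of left-invariant sections of this eigenbundle:\<close>
definition i_eig_involutive :: "(sec \<Rightarrow> sec) \<Rightarrow> (sec \<Rightarrow> sec \<Rightarrow> sec) \<Rightarrow> bool" where
  "i_eig_involutive T D \<longleftrightarrow> (\<forall>u1 u2 v1 v2.
     T u1 = - u2 \<and> T u2 = u1 \<and> T v1 = - v2 \<and> T v2 = v1 \<longrightarrow>
     (let w1 = D u1 v1 - D u2 v2; w2 = D u1 v2 + D u2 v1 in T w1 = - w2 \<and> T w2 = w1))"

definition gen_pseudo_kaehler :: "(vec3 \<Rightarrow> vec3 \<Rightarrow> vec3) \<Rightarrow> (vec3 \<Rightarrow> vec3 \<Rightarrow> vec3 \<Rightarrow> real)
     \<Rightarrow> (vec3 \<Rightarrow> vec3 \<Rightarrow> real) \<Rightarrow> mat3 \<Rightarrow> mat3 \<Rightarrow> mat3 \<Rightarrow> vec3 \<Rightarrow> bool" where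
  "gen_pseudo_kaehler br H F G Jp Jm Xp \<longleftrightarrow>
     i_eig_involutive (Fend G Jp Jm Xp) (dorfman br H F) \<and>
     i_eig_involutive (Gend G \<circ> Fend G Jp Jm Xp) (dorfman br H F)"

end

theory Submission
  imports Defs
begin

lemma matrix_inv_props:
  fixes A :: "real^3^3"
  assumes "invertible A"
  shows "A ** matrix_inv A = mat 1" "matrix_inv A ** A = mat 1"
  using someI_ex[OF assms[unfolded invertible_def]] unfolding matrix_inv_def by auto
lemma gmet_sym: assumes "transpose G = G" shows "gmet G x y = gmet G y x"
proof -
  have "x \<bullet> (G *v y) = (x v* G) \<bullet> y" by (simp add: dot_lmul_matrix)
  also have "x v* G = transpose G *v x" by simp
  finally show ?thesis unfolding gmet_def using assms by (simp add: inner_commute)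
qed
lemma mv_lin:
  fixes A :: "real^3^3"
  shows "A *v (a + b) = A *v a + A *v b" "A *v (a - b) = A *v a - A *v b"
    "A *v (- a) = - (A *v a)" "A *v (r *\<^sub>R a) = r *\<^sub>R (A *v a)" "A *v 0 = 0"
  using matrix_vector_mul_linear[of A]
  by (simp_all add: linear_add linear_diff linear_neg linear_scale linear_0)
lemma gmet_lin:
  "gmet G (a + b) c = gmet G a c + gmet G b c"
  "gmet G (a - b) c = gmet G a c - gmet G b c"
  "gmet G (- a) c = - gmet G a c"
  "gmet G (r *\<^sub>R a) c = r * gmet G a c"
  "gmet G 0 c = 0"
  "gmet G c (a + b) = gmet G c a + gmet G c b"
  "gmet G c (a - b) = gmet G c a - gmet G c b"
  "gmet G c (- a) = - gmet G c a"
  "gmet G c (r *\<^sub>R a) = r * gmet G c a"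
  "gmet G c 0 = 0"
  by (simp_all add: gmet_def mv_lin inner_add_left inner_diff_left inner_add_right inner_diff_right)


lemma covec_dot:
  assumes "linear f" shows "covec f \<bullet> z = f z"
proof -
  have "z = (\<Sum>i\<in>UNIV. z$i *\<^sub>R axis i 1)" using basis_expansion[of z] by (simp add: scalar_mult_eq_scaleR)
  then have "f z = f (\<Sum>i\<in>UNIV. z$i *\<^sub>R axis i 1)" by simp
  also have "\<dots> = (\<Sum>i\<in>UNIV. z$i * f (axis i 1))"
    by (simp add: linear_sum[OF assms] linear_scale[OF assms])
  finally have "f z = (\<Sum>i\<in>UNIV. z$i * f (axis i 1))" .
  then show ?thesis by (simp add: covec_def inner_vec_def mult.commute)
qed

definition sp :: "sec \<Rightarrow> sec \<Rightarrow> real" where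
  "sp u v = (case u of (X, xi, l) \<Rightarrow> case v of (Y, eta, m) \<Rightarrow> (1/2) * (eta \<bullet> X + xi \<bullet> Y) + l * m)"

lemma sp_lin: "sp (u + v) w = sp u w + sp v w" "sp (u - v) w = sp u w - sp v w"
  "sp w (u + v) = sp w u + sp w v" "sp w (u - v) = sp w u - sp w v"
proof -
  obtain a1 a2 a3 where u: "u = (a1,a2,a3)" by (cases u) auto
  obtain b1 b2 b3 where v: "v = (b1,b2,b3)" by (cases v) auto
  obtain c1 c2 c3 where w: "w = (c1,c2,c3)" by (cases w) auto
  show "sp (u + v) w = sp u w + sp v w" "sp (u - v) w = sp u w - sp v w"
    "sp w (u + v) = sp w u + sp w v" "sp w (u - v) = sp w u - sp w v"
    unfolding u v w by (simp_all add: sp_def inner_add_left inner_add_right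
      inner_diff_left inner_diff_right; simp add: field_simps)+
qed

locale S =
  fixes br :: "real^3 \<Rightarrow> real^3 \<Rightarrow> real^3"
    and H :: "real^3 \<Rightarrow> real^3 \<Rightarrow> real^3 \<Rightarrow> real"
    and F :: "real^3 \<Rightarrow> real^3 \<Rightarrow> real"
    and G Jp Jm :: "real^3^3" and Xp Xm :: "real^3"
  assumes lie: "lie_algebra br"
    and cd: "courant_data br H F"
    and comp: "component_data G Jp Jm Xp Xm"
    and pd: "pos_def G"
    and gpk: "gen_pseudo_kaehler br H F G Jp Jm Xp"
begin

abbreviation "g \<equiv> gmet G"

lemma Gs: "transpose G = G" and Ginv: "invertible G"
  and skp: "\<And>x y. g (Jp *v x) y = - g x (Jp *v y)"
  and skm: "\<And>x y. g (Jm *v x) y = - g x (Jm *v y)"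
  and Xpu: "g Xp Xp = 1" and Xmu: "g Xm Xm = 1" and JXp: "Jp *v Xp = 0" and JXm: "Jm *v Xm = 0"
  and Jp2: "\<And>y. g Xp y = 0 \<Longrightarrow> Jp *v (Jp *v y) = - y"
  and Jm2: "\<And>y. g Xm y = 0 \<Longrightarrow> Jm *v (Jm *v y) = - y"
  using comp unfolding component_data_def by auto

lemma gsym: "g x y = g y x" using gmet_sym[OF Gs] .

lemma skp': "g x (Jp *v y) = - g (Jp *v x) y" using skp by simp
lemma skm': "g x (Jm *v y) = - g (Jm *v x) y" using skm by simp

lemma br_lin:
  "br (a + b) c = br a c + br b c" "br (a - b) c = br a c - br b c" "br (- a) c = - br a c"
  "br (r *\<^sub>R a) c = r *\<^sub>R br a c" "br 0 c = 0"
  "br c (a + b) = br c a + br c b" "br c (a - b) = br c a - br c b" "br c (- a) = - br c a"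
  "br c (r *\<^sub>R a) = r *\<^sub>R br c a" "br c 0 = 0"
proof -
  have l1: "linear (\<lambda>x. br x c)" and l2: "linear (br c)" for c
    using lie unfolding lie_algebra_def bilinear_def by auto
  show "br (a + b) c = br a c + br b c" "br (a - b) c = br a c - br b c" "br (- a) c = - br a c"
  "br (r *\<^sub>R a) c = r *\<^sub>R br a c" "br 0 c = 0"
  "br c (a + b) = br c a + br c b" "br c (a - b) = br c a - br c b" "br c (- a) = - br c a"
  "br c (r *\<^sub>R a) = r *\<^sub>R br c a" "br c 0 = 0"
    using linear_add[OF l1[of c]] linear_diff[OF l1[of c]] linear_neg[OF l1[of c]] linear_scale[OF l1[of c]] linear_0[OF l1[of c]]
     linear_add[OF l2[of c]] linear_diff[OF l2[of c]] linear_neg[OF l2[of c]] linear_scale[OF l2[of c]] linear_0[OF l2[of c]]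
    by simp_all
qed

lemma br_anti: "br a b = - br b a"
proof -
  have "br (a + b) (a + b) = 0" using lie unfolding lie_algebra_def by blast
  moreover have "br a a = 0" "br b b = 0" using lie unfolding lie_algebra_def by blast+
  ultimately have "br a b + br b a = 0" by (simp add: br_lin add.commute)
  then show ?thesis by (simp add: eq_neg_iff_add_eq_0)
qed

lemma jacobi: "br x (br y z) + br y (br z x) + br z (br x y) = 0"
  using lie unfolding lie_algebra_def by blast

lemma H_lin:
  "H (a + b) y z = H a y z + H b y z" "H (a - b) y z = H a y z - H b y z" "H (- a) y z = - H a y z"
  "H (r *\<^sub>R a) y z = r * H a y z" "H 0 y z = 0"
  "H x (a + b) z = H x a z + H x b z" "H x (a - b) z = H x a z - H x b z" "H x (- a) z = - H x a z"
  "H x (r *\<^sub>R a) z = r * H x a z" "H x 0 z = 0"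
  "H x y (a + b) = H x y a + H x y b" "H x y (a - b) = H x y a - H x y b" "H x y (- a) = - H x y a"
  "H x y (r *\<^sub>R a) = r * H x y a" "H x y 0 = 0"
proof -
  have l1: "linear (\<lambda>x. H x y z)" and l2: "linear (\<lambda>y. H x y z)" and l3: "linear (\<lambda>z. H x y z)" for x y z
    using cd unfolding courant_data_def three_form_def trilinear_def by blast+
  show "H (a + b) y z = H a y z + H b y z" "H (a - b) y z = H a y z - H b y z" "H (- a) y z = - H a y z"
  "H (r *\<^sub>R a) y z = r * H a y z" "H 0 y z = 0"
  "H x (a + b) z = H x a z + H x b z" "H x (a - b) z = H x a z - H x b z" "H x (- a) z = - H x a z"
  "H x (r *\<^sub>R a) z = r * H x a z" "H x 0 z = 0"
  "H x y (a + b) = H x y a + H x y b" "H x y (a - b) = H x y a - H x y b" "H x y (- a) = - H x y a"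
  "H x y (r *\<^sub>R a) = r * H x y a" "H x y 0 = 0"
    using linear_add[OF l1[of y z]] linear_diff[OF l1[of y z]] linear_neg[OF l1[of y z]] linear_scale[OF l1[of y z]] linear_0[OF l1[of y z]]
     linear_add[OF l2[of x z]] linear_diff[OF l2[of x z]] linear_neg[OF l2[of x z]] linear_scale[OF l2[of x z]] linear_0[OF l2[of x z]]
     linear_add[OF l3[of x y]] linear_diff[OF l3[of x y]] linear_neg[OF l3[of x y]] linear_scale[OF l3[of x y]] linear_0[OF l3[of x y]]
    by simp_all
qed

lemma H_anti: "H x y z = - H y x z" "H x y z = - H x z y"
  using cd unfolding courant_data_def three_form_def by blast+

lemma F_lin:
  "F (a + b) c = F a c + F b c" "F (a - b) c = F a c - F b c" "F (- a) c = - F a c"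
  "F (r *\<^sub>R a) c = r * F a c" "F 0 c = 0"
  "F c (a + b) = F c a + F c b" "F c (a - b) = F c a - F c b" "F c (- a) = - F c a"
  "F c (r *\<^sub>R a) = r * F c a" "F c 0 = 0"
proof -
  have l1: "linear (\<lambda>x. F x c)" and l2: "linear (F c)" for c
    using cd unfolding courant_data_def two_form_def bilinear_def by blast+
  show "F (a + b) c = F a c + F b c" "F (a - b) c = F a c - F b c" "F (- a) c = - F a c"
  "F (r *\<^sub>R a) c = r * F a c" "F 0 c = 0"
  "F c (a + b) = F c a + F c b" "F c (a - b) = F c a - F c b" "F c (- a) = - F c a"
  "F c (r *\<^sub>R a) = r * F c a" "F c 0 = 0"
    using linear_add[OF l1[of c]] linear_diff[OF l1[of c]] linear_neg[OF l1[of c]] linear_scale[OF l1[of c]] linear_0[OF l1[of c]]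
     linear_add[OF l2[of c]] linear_diff[OF l2[of c]] linear_neg[OF l2[of c]] linear_scale[OF l2[of c]] linear_0[OF l2[of c]]
    by simp_all
qed

lemma F_anti: "F x y = - F y x"
  using cd unfolding courant_data_def two_form_def by blast

lemma Ginv_mv: "matrix_inv G *v (G *v z) = z"
  by (simp add: matrix_vector_mul_assoc matrix_inv_props(2)[OF Ginv])
lemma G_Ginv_mv: "G *v (matrix_inv G *v z) = z"
  by (simp add: matrix_vector_mul_assoc matrix_inv_props(1)[OF Ginv])

lemma transJ:
  assumes sk: "\<And>x y. g (J *v x) y = - g x (J *v y)"
  shows "transpose J *v (G *v z) = - (G *v (J *v z))"
proof -
  let ?d = "transpose J *v (G *v z) + G *v (J *v z)"
  have "?d \<bullet> (transpose J *v (G *v z)) = (J *v ?d) \<bullet> (G *v z)"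
    by (metis dot_lmul_matrix transpose_matrix_vector transpose_transpose)
  also have "\<dots> = - (?d \<bullet> (G *v (J *v z)))" using sk[of ?d z] by (simp add: gmet_def)
  finally have "?d \<bullet> ?d = 0" by (simp add: inner_add_right)
  then show ?thesis by (simp add: eq_neg_iff_add_eq_0)
qed

lemma Fend_G: "Fend G Jp Jm Xp (X, G *v a, l) =
   ((1/2) *\<^sub>R (Jp *v X + Jm *v X) + (1/2) *\<^sub>R (Jp *v a - Jm *v a) + l *\<^sub>R Xp,
    G *v ((1/2) *\<^sub>R (Jp *v X - Jm *v X) + (1/2) *\<^sub>R (Jp *v a + Jm *v a) + l *\<^sub>R Xp),
    - (1/2) * g Xp X - (1/2) * g Xp a)"
proof -
  have "transpose (Jp + Jm) *v (G *v a) = - (G *v (Jp *v a)) - (G *v (Jm *v a))"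
    using transJ[OF skp, of a] transJ[OF skm, of a]
    by (simp add: vector_matrix_mult_add_rdistrib)
  moreover have "(G *v a) \<bullet> Xp = g Xp a" by (simp add: gmet_def inner_commute)
  moreover have "(G *v a) v* Jp = - (G *v (Jp *v a))" "(G *v a) v* Jm = - (G *v (Jm *v a))"
    using transJ[OF skp, of a] transJ[OF skm, of a] by simp_all
  ultimately show ?thesis
    by (simp add: Fend_def Ginv_mv matrix_vector_mult_add_rdistrib matrix_vector_mult_diff_rdistrib
        mv_lin algebra_simps)
qed

lemma Gend_G: "Gend G (X, G *v a, l) = (a, G *v X, l)"
  by (simp add: Gend_def Ginv_mv)

lemma sp_G: "sp (X, G *v a, l) (Y, G *v b, m) = (1/2) * (g X b + g a Y) + l * m"
proof -
  have "Y \<bullet> (G *v a) = a \<bullet> (G *v Y)" using gsym[of Y a] by (simp add: gmet_def)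
  then show ?thesis by (simp add: sp_def gmet_def inner_commute)
qed

lemma sec_G: "\<exists>a. u = (fst u, G *v a, snd (snd u))"
  by (metis G_Ginv_mv prod.collapse)

end


lemma vec_times2: "(v::real^3) * 2 = 2 *\<^sub>R v"
  by (simp add: vec_eq_iff)

lemma sp_more: "sp w (- u) = - sp w u" "sp w 0 = 0" "sp (- u) w = - sp u w" "sp 0 w = 0"
proof -
  obtain a1 a2 a3 where u: "u = (a1,a2,a3)" by (cases u) auto
  obtain c1 c2 c3 where w: "w = (c1,c2,c3)" by (cases w) auto
  show "sp w (- u) = - sp w u" "sp w 0 = 0" "sp (- u) w = - sp u w" "sp 0 w = 0"
    unfolding u w by (simp_all add: sp_def zero_prod_def; simp add: field_simps)+
qed

lemma invol_sp:
  assumes inv: "i_eig_involutive T D" and skew: "\<And>a b. sp (T a) b = - sp a (T b)"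
    and h: "T u1 = - u2" "T u2 = u1" "T v1 = - v2" "T v2 = v1"
  shows "\<And>n1 n2. T n1 = - n2 \<Longrightarrow> T n2 = n1 \<Longrightarrow>
           sp (D u1 v1 - D u2 v2) n1 = sp (D u1 v2 + D u2 v1) n2 \<and>
           sp (D u1 v1 - D u2 v2) n2 = - sp (D u1 v2 + D u2 v1) n1"
    and "\<And>k. T k = 0 \<Longrightarrow> sp (D u1 v1 - D u2 v2) k = 0 \<and> sp (D u1 v2 + D u2 v1) k = 0"
proof -
  define w1 where "w1 = D u1 v1 - D u2 v2"
  define w2 where "w2 = D u1 v2 + D u2 v1"
  have tw: "T w1 = - w2" "T w2 = w1" using inv h unfolding i_eig_involutive_def w1_def w2_def Let_def
    by blast+
  {
    fix n1 n2 assume n: "T n1 = - n2" "T n2 = n1"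
    have "sp w1 n1 = sp (T w2) n1" using tw by simp
    also have "\<dots> = - sp w2 (T n1)" by (rule skew)
    finally have 1: "sp w1 n1 = sp w2 n2" using n by (simp add: sp_more)
    have "sp w1 n2 = sp (T w2) n2" using tw by simp
    also have "\<dots> = - sp w2 (T n2)" by (rule skew)
    finally have 2: "sp w1 n2 = - sp w2 n1" using n by (simp add: sp_more)
    show "sp (D u1 v1 - D u2 v2) n1 = sp (D u1 v2 + D u2 v1) n2 \<and>
           sp (D u1 v1 - D u2 v2) n2 = - sp (D u1 v2 + D u2 v1) n1"
      using 1 2 unfolding w1_def w2_def by simp
  }
  {
    fix k assume k: "T k = 0"
    have "sp w1 k = sp (T w2) k" using tw by simp
    also have "\<dots> = - sp w2 (T k)" by (rule skew)
    finally have 1: "sp w1 k = 0" using k by (simp add: sp_more)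
    have "sp w2 k = - sp (T w1) k" using tw by (simp add: sp_more)
    also have "\<dots> = sp w1 (T k)" by (simp add: skew)
    finally have 2: "sp w2 k = 0" using k by (simp add: sp_more)
    show "sp (D u1 v1 - D u2 v2) k = 0 \<and> sp (D u1 v2 + D u2 v1) k = 0"
      using 1 2 unfolding w1_def w2_def by simp
  }
qed

context S begin

abbreviation "TF \<equiv> Fend G Jp Jm Xp"
abbreviation "TG \<equiv> Gend G \<circ> Fend G Jp Jm Xp"
abbreviation "DD \<equiv> dorfman br H F"

lemma T_skew: "sp (TF u) v = - sp u (TF v)"
proof -
  obtain a where u: "u = (fst u, G *v a, snd (snd u))" using sec_G by blast
  obtain b where v: "v = (fst v, G *v b, snd (snd v))" using sec_G by blast
  obtain X l Y m where XY: "X = fst u" "l = snd (snd u)" "Y = fst v" "m = snd (snd v)" by blast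
  have s: "g X Xp = g Xp X" "g a Xp = g Xp a" "g Y Xp = g Xp Y" "g b Xp = g Xp b" using gsym by blast+
  have "sp (TF (X, G *v a, l)) (Y, G *v b, m) = - sp (X, G *v a, l) (TF (Y, G *v b, m))"
    unfolding Fend_G sp_G using s
    by (simp add: gmet_lin skp' skm' algebra_simps)
  then show ?thesis using u v XY by metis
qed

lemma GT_G: "TG (X, G *v a, l) =
   ((1/2) *\<^sub>R (Jp *v X - Jm *v X) + (1/2) *\<^sub>R (Jp *v a + Jm *v a) + l *\<^sub>R Xp,
    G *v ((1/2) *\<^sub>R (Jp *v X + Jm *v X) + (1/2) *\<^sub>R (Jp *v a - Jm *v a) + l *\<^sub>R Xp),
    - (1/2) * g Xp X - (1/2) * g Xp a)"
  by (simp add: Fend_G Gend_G)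

lemma GT_skew: "sp (TG u) v = - sp u (TG v)"
proof -
  obtain a where u: "u = (fst u, G *v a, snd (snd u))" using sec_G by blast
  obtain b where v: "v = (fst v, G *v b, snd (snd v))" using sec_G by blast
  obtain X l Y m where XY: "X = fst u" "l = snd (snd u)" "Y = fst v" "m = snd (snd v)" by blast
  have s: "g X Xp = g Xp X" "g a Xp = g Xp a" "g Y Xp = g Xp Y" "g b Xp = g Xp b" using gsym by blast+
  have "sp (TG (X, G *v a, l)) (Y, G *v b, m) = - sp (X, G *v a, l) (TG (Y, G *v b, m))"
    unfolding GT_G sp_G using s
    by (simp add: gmet_lin skp' skm' algebra_simps)
  then show ?thesis using u v XY by metis
qed

lemma gXpJp: "g Xp (Jp *v x) = 0"
  using skp[of Xp x] JXp by (simp add: gmet_def)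

lemma JpJp: "Jp *v (Jp *v x) = g Xp x *\<^sub>R Xp - x"
proof -
  let ?y = "x - g Xp x *\<^sub>R Xp"
  have "g Xp ?y = 0" using Xpu by (simp add: gmet_lin)
  then have "Jp *v (Jp *v ?y) = - ?y" by (rule Jp2)
  then show ?thesis using JXp by (simp add: mv_lin)
qed

definition "Pp x = ((x, G *v x, 0::real), (- (Jp *v x), G *v (- (Jp *v x)), g Xp x))"
definition "Pm x = ((x, G *v (- x), 0::real), (- (Jm *v x), G *v (Jm *v x), 0::real))"
definition "Pn x = ((x, G *v (- x), 0::real), (Jm *v x, G *v (- (Jm *v x)), 0::real))"
definition "kk = (Xm, G *v (- Xm), 0::real)"

lemma Pp_T: "TF (fst (Pp x)) = - snd (Pp x)" "TF (snd (Pp x)) = fst (Pp x)"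
  unfolding Pp_def fst_conv snd_conv Fend_G
  by (simp_all add: JpJp gXpJp vec_times2 mv_lin vec_eq_iff gmet_lin field_simps)

lemma Pp_GT: "TG (fst (Pp x)) = - snd (Pp x)" "TG (snd (Pp x)) = fst (Pp x)"
  unfolding Pp_def fst_conv snd_conv GT_G
  by (simp_all add: JpJp gXpJp vec_times2 mv_lin vec_eq_iff gmet_lin field_simps)

lemma Pm_T: "g Xm x = 0 \<Longrightarrow> TF (fst (Pm x)) = - snd (Pm x) \<and> TF (snd (Pm x)) = fst (Pm x)"
  unfolding Pm_def fst_conv snd_conv Fend_G
  by (simp add: Jm2 vec_times2 mv_lin vec_eq_iff gmet_lin field_simps)

lemma Pn_GT: "g Xm x = 0 \<Longrightarrow> TG (fst (Pn x)) = - snd (Pn x) \<and> TG (snd (Pn x)) = fst (Pn x)"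
  unfolding Pn_def fst_conv snd_conv GT_G
  by (simp add: Jm2 vec_times2 mv_lin vec_eq_iff gmet_lin field_simps)

lemma kk_T: "TF kk = 0" and kk_GT: "TG kk = 0"
  unfolding kk_def Fend_G GT_G by (simp_all add: JXm vec_times2 mv_lin vec_eq_iff gmet_lin field_simps zero_prod_def)

lemma invT: "i_eig_involutive TF DD" and invGT: "i_eig_involutive TG DD"
  using gpk unfolding gen_pseudo_kaehler_def by auto

lemma sp_D: "sp (DD (X, G *v a, l) (Y, G *v b, m)) (Z, G *v c, k) =
  (1/2) * (g (br X Y) c + (- g (br X Z) b + g (br Y Z) a + H Y X Z - 2 * (m * F X Z - l * F Y Z)))
  + F X Y * k"
proof -
  let ?f = "\<lambda>Z. - ((G *v b) \<bullet> br X Z) + (G *v a) \<bullet> br Y Z + H Y X Z - 2 * (m * F X Z - l * F Y Z)"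
  have lin: "linear ?f"
    by (rule linearI) (simp_all add: br_lin H_lin F_lin inner_add_right algebra_simps)
  have "(G *v c) \<bullet> br X Y = g (br X Y) c" "(G *v b) \<bullet> br X Z = g (br X Z) b"
    "(G *v a) \<bullet> br Y Z = g (br Y Z) a" by (simp_all add: gmet_def inner_commute)
  then show ?thesis unfolding dorfman_def sp_def using covec_dot[OF lin, of Z]
    by simp
qed

end


context S begin

lemma K_F: assumes "TF u1 = - u2" "TF u2 = u1" "TF v1 = - v2" "TF v2 = v1"
  shows "sp (DD u1 v1 - DD u2 v2) kk = 0" "sp (DD u1 v2 + DD u2 v1) kk = 0"
  using invol_sp(2)[OF invT T_skew assms kk_T] by auto
lemma K_G: assumes "TG u1 = - u2" "TG u2 = u1" "TG v1 = - v2" "TG v2 = v1"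
  shows "sp (DD u1 v1 - DD u2 v2) kk = 0" "sp (DD u1 v2 + DD u2 v1) kk = 0"
  using invol_sp(2)[OF invGT GT_skew assms kk_GT] by auto
lemma N_F: assumes "TF u1 = - u2" "TF u2 = u1" "TF v1 = - v2" "TF v2 = v1" "TF n1 = - n2" "TF n2 = n1"
  shows "sp (DD u1 v1 - DD u2 v2) n1 = sp (DD u1 v2 + DD u2 v1) n2"
    "sp (DD u1 v1 - DD u2 v2) n2 = - sp (DD u1 v2 + DD u2 v1) n1"
  using invol_sp(1)[OF invT T_skew assms(1-4) assms(5,6)] by auto
lemma N_G: assumes "TG u1 = - u2" "TG u2 = u1" "TG v1 = - v2" "TG v2 = v1" "TG n1 = - n2" "TG n2 = n1"
  shows "sp (DD u1 v1 - DD u2 v2) n1 = sp (DD u1 v2 + DD u2 v1) n2"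
    "sp (DD u1 v1 - DD u2 v2) n2 = - sp (DD u1 v2 + DD u2 v1) n1"
  using invol_sp(1)[OF invGT GT_skew assms(1-4) assms(5,6)] by auto

end


locale S1 = S +
  fixes f1 f2 :: "real^3"
  assumes f1m: "g Xm f1 = 0" and f11: "g f1 f1 = 1" and f2d: "Jm *v f1 = f2" and Xpf2: "g Xp f2 = 0"
begin


lemma Jmf2: "Jm *v f2 = - f1" using Jm2[OF f1m] f2d by simp

lemma gfr: "g f1 f1 = 1" "g f2 f2 = 1" "g Xm Xm = 1" "g f1 f2 = 0" "g f2 f1 = 0" "g f1 Xm = 0" "g Xm f1 = 0"
  "g f2 Xm = 0" "g Xm f2 = 0" "g Xp f2 = 0"
proof -
  have a: "g f2 f2 = 1" using skm[of f1 f2] f2d Jmf2 f11 by (simp add: gmet_lin)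
  have b: "g f1 f2 = 0" using skm[of f1 f1] f2d gsym[of f1 f2] by simp
  have c: "g f2 Xm = 0" using skm[of f1 Xm] f2d JXm by (simp add: gmet_lin)
  show "g f1 f1 = 1" "g f2 f2 = 1" "g Xm Xm = 1" "g f1 f2 = 0" "g f2 f1 = 0" "g f1 Xm = 0" "g Xm f1 = 0"
  "g f2 Xm = 0" "g Xm f2 = 0" "g Xp f2 = 0"
    using a b c f11 Xmu f1m Xpf2 gsym by metis+
qed

lemma gbr: "g f1 (br a b) = g (br a b) f1" "g f2 (br a b) = g (br a b) f2" "g Xm (br a b) = g (br a b) Xm"
  using gsym by blast+

lemma brn: "br f2 f1 = - br f1 f2" "br Xm f1 = - br f1 Xm" "br Xm f2 = - br f2 Xm" "br x x = 0"
  using br_anti lie unfolding lie_algebra_def by blast+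

lemma Hn: "H f2 f1 z = - H f1 f2 z" "H Xm f1 z = - H f1 Xm z" "H Xm f2 z = - H f2 Xm z"
  "H x f2 f1 = - H x f1 f2" "H x Xm f1 = - H x f1 Xm" "H x Xm f2 = - H x f2 Xm"
  "H x x z = 0" "H x z z = 0" "H x z x = 0"
proof -
  have 1: "H x x z = 0" for x z using H_anti(1)[of x x z] by simp
  have 2: "H x z z = 0" for x z using H_anti(2)[of x z z] by simp
  have 3: "H x z x = 0" for x z using H_anti(2)[of x z x] 1 by simp
  show "H f2 f1 z = - H f1 f2 z" "H Xm f1 z = - H f1 Xm z" "H Xm f2 z = - H f2 Xm z"
  "H x f2 f1 = - H x f1 f2" "H x Xm f1 = - H x f1 Xm" "H x Xm f2 = - H x f2 Xm"
  "H x x z = 0" "H x z z = 0" "H x z x = 0" using H_anti 1 2 3 by blast+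
qed

lemma Fn: "F f2 f1 = - F f1 f2" "F Xm f1 = - F f1 Xm" "F Xm f2 = - F f2 Xm" "F x x = 0"
proof -
  have "F x x = 0" using F_anti[of x x] by simp
  then show "F f2 f1 = - F f1 f2" "F Xm f1 = - F f1 Xm" "F Xm f2 = - F f2 Xm" "F x x = 0"
    using F_anti by blast+
qed




lemma expand0: "\<exists>a b c. x = a *\<^sub>R f1 + b *\<^sub>R f2 + c *\<^sub>R Xm"
proof -
  have ne: "f1 \<noteq> f2" "f1 \<noteq> Xm" "f2 \<noteq> Xm" using gfr by (metis zero_neq_one)+
  have nz: "Xm \<noteq> 0" using gfr(3) by (auto simp: gmet_lin)
  have i1: "independent {Xm}" using nz by simp
  have "f2 \<notin> span {Xm}"
  proof
    assume "f2 \<in> span {Xm}"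
    then obtain k where "f2 = k *\<^sub>R Xm" by (auto simp: span_singleton)
    then have "g f2 f2 = k * g Xm f2" by (simp add: gmet_lin)
    then show False using gfr by simp
  qed
  then have i2: "independent {f2, Xm}" using i1 ne by (simp add: independent_insert)
  have "f1 \<notin> span {f2, Xm}"
  proof
    assume "f1 \<in> span {f2, Xm}"
    then obtain k where "f1 - k *\<^sub>R f2 \<in> span {Xm}" by (auto simp: span_breakdown_eq)
    then obtain k2 where "f1 - k *\<^sub>R f2 = k2 *\<^sub>R Xm" by (auto simp: span_singleton)
    then have e: "f1 = k *\<^sub>R f2 + k2 *\<^sub>R Xm" by (simp add: algebra_simps)
    have "g (k *\<^sub>R f2 + k2 *\<^sub>R Xm) f1 = k * g f2 f1 + k2 * g Xm f1" by (simp add: gmet_lin)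
    then have "g f1 f1 = k * g f2 f1 + k2 * g Xm f1" using e by metis
    then show False using gfr by simp
  qed
  then have i3: "independent {f1, f2, Xm}" using i2 ne by (simp add: independent_insert)
  have c3: "card {f1, f2, Xm} = 3" using ne by simp
  have "UNIV \<subseteq> span {f1, f2, Xm}"
    by (rule card_ge_dim_independent) (use i3 c3 in auto)
  then have "x \<in> span {f1, f2, Xm}" by auto
  then obtain k where "x - k *\<^sub>R f1 \<in> span {f2, Xm}" by (auto simp: span_breakdown_eq)
  then obtain k' where "x - k *\<^sub>R f1 - k' *\<^sub>R f2 \<in> span {Xm}" by (auto simp: span_breakdown_eq)
  then obtain k'' where "x - k *\<^sub>R f1 - k' *\<^sub>R f2 = k'' *\<^sub>R Xm" by (auto simp: span_singleton)
  then have "x = k *\<^sub>R f1 + k' *\<^sub>R f2 + k'' *\<^sub>R Xm" by (simp add: algebra_simps)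
  then show ?thesis by blast
qed

lemma expand: "x = g x f1 *\<^sub>R f1 + g x f2 *\<^sub>R f2 + g x Xm *\<^sub>R Xm"
proof -
  obtain a b c where x: "x = a *\<^sub>R f1 + b *\<^sub>R f2 + c *\<^sub>R Xm" using expand0 by blast
  have "g x f1 = a" "g x f2 = b" "g x Xm = c" unfolding x by (simp_all add: gmet_lin gfr)
  then show ?thesis using x by simp
qed

lemma frame_eq: "g x f1 = g y f1 \<Longrightarrow> g x f2 = g y f2 \<Longrightarrow> g x Xm = g y Xm \<Longrightarrow> x = y"
  by (metis expand)

lemma rho: "g Xp f1 * g Xp f1 + g Xp Xm * g Xp Xm = 1"
proof -
  have "Xp = g Xp f1 *\<^sub>R f1 + g Xp Xm *\<^sub>R Xm" using expand[of Xp] gfr by simp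
  then have "g Xp Xp = g (g Xp f1 *\<^sub>R f1 + g Xp Xm *\<^sub>R Xm) (g Xp f1 *\<^sub>R f1 + g Xp Xm *\<^sub>R Xm)"
    by simp
  then show ?thesis using Xpu by (simp add: gmet_lin gfr)
qed


lemma expand_eq: assumes "g v f1 = a" "g v f2 = b" "g v Xm = c"
  shows "v = a *\<^sub>R f1 + b *\<^sub>R f2 + c *\<^sub>R Xm"
proof -
  have "v = g v f1 *\<^sub>R f1 + g v f2 *\<^sub>R f2 + g v Xm *\<^sub>R Xm" by (rule expand)
  also have "\<dots> = a *\<^sub>R f1 + b *\<^sub>R f2 + c *\<^sub>R Xm" using assms by simp
  finally show ?thesis .
qed


lemma jp_frame: "\<exists>\<sigma>. \<sigma> * \<sigma> = 1 \<and> Jp *v f1 = (\<sigma> * g Xp Xm) *\<^sub>R f2 \<and>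
    Jp *v f2 = (- \<sigma> * g Xp Xm) *\<^sub>R f1 + (\<sigma> * g Xp f1) *\<^sub>R Xm \<and>
    Jp *v Xm = (- \<sigma> * g Xp f1) *\<^sub>R f2"
proof -
  define al where "al = g Xp f1"
  define be where "be = g Xp Xm"
  define s where "s = g (Jp *v f1) f2"
  define t where "t = g (Jp *v f1) Xm"
  define u where "u = g (Jp *v f2) Xm"
  have z: "g (Jp *v x) x = 0" for x using skp[of x x] gsym[of x "Jp *v x"] by simp
  have e1: "Jp *v f1 = 0 *\<^sub>R f1 + s *\<^sub>R f2 + t *\<^sub>R Xm"
    by (rule expand_eq) (simp_all add: z s_def t_def)
  have e2: "Jp *v f2 = (- s) *\<^sub>R f1 + 0 *\<^sub>R f2 + u *\<^sub>R Xm"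
    by (rule expand_eq) (use skp[of f2 f1] gsym[of f2 "Jp *v f1"] z in \<open>simp_all add: s_def u_def\<close>)
  have e3: "Jp *v Xm = (- t) *\<^sub>R f1 + (- u) *\<^sub>R f2 + 0 *\<^sub>R Xm"
    by (rule expand_eq) (use skp[of Xm f1] gsym[of Xm "Jp *v f1"] skp[of Xm f2] gsym[of Xm "Jp *v f2"] z in
      \<open>simp_all add: t_def u_def\<close>)
  have xp: "Xp = al *\<^sub>R f1 + 0 *\<^sub>R f2 + be *\<^sub>R Xm"
    by (rule expand_eq) (simp_all add: al_def be_def gfr)
  have r: "al * al + be * be = 1" using rho unfolding al_def be_def .
  have "Jp *v (al *\<^sub>R f1 + 0 *\<^sub>R f2 + be *\<^sub>R Xm) = 0" using JXp xp by metis
  then have v0: "(al * s - be * u) *\<^sub>R f2 + (al * t) *\<^sub>R Xm + (- be * t) *\<^sub>R f1 = 0"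
    unfolding mv_lin e1 e3 by (simp add: algebra_simps)
  have q1: "al * s - be * u = 0" and q2: "al * t = 0" and q3: "be * t = 0"
  proof -
    have "g ((al * s - be * u) *\<^sub>R f2 + (al * t) *\<^sub>R Xm + (- be * t) *\<^sub>R f1) f2 = 0"
      "g ((al * s - be * u) *\<^sub>R f2 + (al * t) *\<^sub>R Xm + (- be * t) *\<^sub>R f1) Xm = 0"
      "g ((al * s - be * u) *\<^sub>R f2 + (al * t) *\<^sub>R Xm + (- be * t) *\<^sub>R f1) f1 = 0"
      using v0 by (simp_all add: gmet_lin)
    then show "al * s - be * u = 0" "al * t = 0" "be * t = 0" by (simp_all add: gmet_lin gfr)
  qed
  have t0: "t = 0" using q2 q3 r by algebra
  have "Jp *v (Jp *v f2) = - f2" using Jp2 gfr by blast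
  then have "(- s) *\<^sub>R (Jp *v f1) + u *\<^sub>R (Jp *v Xm) = - f2"
    unfolding e2 by (simp add: mv_lin)
  then have "(- s * s - u * u) *\<^sub>R f2 = - f2"
    unfolding e1 e3 t0 by (simp add: algebra_simps)
  then have "g ((- s * s - u * u) *\<^sub>R f2) f2 = g (- f2) f2" by simp
  then have su: "s * s + u * u = 1" by (simp add: gmet_lin gfr)
  define \<sigma> where "\<sigma> = al * u + be * s"
  have sg: "\<sigma> * \<sigma> = 1" unfolding \<sigma>_def using r su q1 by algebra
  have s1: "s = \<sigma> * be" unfolding \<sigma>_def using r q1 by algebra
  have u1: "u = \<sigma> * al" unfolding \<sigma>_def using r q1 by algebra
  show ?thesis
    apply (rule exI[of _ \<sigma>])
    using sg e1 e2 e3 t0 s1 u1 unfolding al_def[symmetric] be_def[symmetric]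
    by (simp add: algebra_simps)
qed

end

locale S2 = S1 +
  fixes \<sigma> :: real
  assumes sg: "\<sigma> * \<sigma> = 1"
    and Jpf1: "Jp *v f1 = (\<sigma> * g Xp Xm) *\<^sub>R f2"
    and Jpf2: "Jp *v f2 = (- \<sigma> * g Xp Xm) *\<^sub>R f1 + (\<sigma> * g Xp f1) *\<^sub>R Xm"
    and JpXm: "Jp *v Xm = (- \<sigma> * g Xp f1) *\<^sub>R f2"
begin
lemmas red0 = sp_lin sp_D Pp_def Pm_def Pn_def kk_def fst_conv snd_conv
lemmas red = gfr gbr brn Hn Fn Jpf1 Jpf2 JpXm f2d Jmf2 JXm br_lin H_lin F_lin gmet_lin mv_lin

lemma Pm1: "TF (fst (Pm f1)) = - snd (Pm f1)" "TF (snd (Pm f1)) = fst (Pm f1)"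
  using Pm_T[OF f1m] by auto
lemma Pn1: "TG (fst (Pn f1)) = - snd (Pn f1)" "TG (snd (Pn f1)) = fst (Pn f1)"
  using Pn_GT[OF f1m] by auto



lemma E1: "1 * (F f2 Xm) * (g Xp Xm) + 1 * (g (br f1 Xm) Xm) + 1 * (g (br f2 Xm) f2) * (g Xp f1) * \<sigma> = 0"
  using K_F(1)[OF Pp_T[of Xm] Pm1] unfolding red0 by (simp add: red algebra_simps)

lemma E2: "-1 * (F f2 Xm) * (g Xp Xm) + 1 * (g (br f1 Xm) Xm) + -1 * (g (br f2 Xm) f2) * (g Xp f1) * \<sigma> = 0"
  using K_G(1)[OF Pp_GT[of Xm] Pn1] unfolding red0 by (simp add: red algebra_simps)

lemma E3: "1 * (F f2 Xm) * (g Xp f1) + -1 * (g (br f2 Xm) f2) * (g Xp Xm) * \<sigma> + 1 * (g (br f1 Xm) f1) = 0"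
  using K_F(1)[OF Pp_T[of f1] Pm1] unfolding red0 by (simp add: red algebra_simps)

lemma E4: "-1 * (F f2 Xm) * (g Xp f1) + 1 * (g (br f2 Xm) f2) * (g Xp Xm) * \<sigma> + 1 * (g (br f1 Xm) f1) = 0"
  using K_G(1)[OF Pp_GT[of f1] Pn1] unfolding red0 by (simp add: red algebra_simps)

lemma E5: "-1 * (F f2 Xm) * (g Xp Xm) * (g Xp Xm) * \<sigma> + -1 * (F f2 Xm) * (g Xp f1) * (g Xp f1) * \<sigma> + -1 * (g (br f1 Xm) Xm) = 0"
  using K_F(1)[OF Pp_T[of f1] Pp_T[of Xm]] unfolding red0 by (simp add: red algebra_simps)

lemma E6: "-1 * (g (br f1 Xm) Xm) * (g Xp f1) * \<sigma> + 1 * (g (br f2 Xm) f2) + 1 * (g (br f1 Xm) f1) * (g Xp Xm) * \<sigma> = 0"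
  using K_G(2)[OF Pp_GT[of f2] Pn1] unfolding red0 by (simp add: red algebra_simps)

lemma E7: "1 * (F f1 Xm) * (g Xp Xm) + (1/2) * (H f1 f2 Xm) * (g Xp f1) * \<sigma> + 1 * (g (br f2 Xm) Xm) + (1/2) * (g (br f1 f2) Xm) * (g Xp f1) * \<sigma> + (1/2) * (g (br f1 Xm) f2) * (g Xp f1) * \<sigma> + (1/2) * (g (br f2 Xm) f1) * (g Xp f1) * \<sigma> = 0"
  using K_G(2)[OF Pp_GT[of Xm] Pn1] unfolding red0 by (simp add: red algebra_simps)

lemma E8: "1 * (F f1 Xm) * (g Xp Xm) + (1/2) * (H f1 f2 Xm) * (g Xp f1) * \<sigma> + -1 * (g (br f2 Xm) Xm) + (1/2) * (g (br f1 f2) Xm) * (g Xp f1) * \<sigma> + (1/2) * (g (br f1 Xm) f2) * (g Xp f1) * \<sigma> + (1/2) * (g (br f2 Xm) f1) * (g Xp f1) * \<sigma> = 0"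
  using K_F(2)[OF Pp_T[of Xm] Pm1] unfolding red0 by (simp add: red algebra_simps)

lemma E9: "1 * (F f1 Xm) * (g Xp f1) + (1/2) * (H f1 f2 Xm) + (-1/2) * (H f1 f2 Xm) * (g Xp Xm) * \<sigma> + (1/2) * (g (br f1 f2) Xm) + (-1/2) * (g (br f1 f2) Xm) * (g Xp Xm) * \<sigma> + (-1/2) * (g (br f1 Xm) f2) + (-1/2) * (g (br f1 Xm) f2) * (g Xp Xm) * \<sigma> + (-1/2) * (g (br f2 Xm) f1) + (-1/2) * (g (br f2 Xm) f1) * (g Xp Xm) * \<sigma> = 0"
  using K_F(2)[OF Pp_T[of f1] Pm1] unfolding red0 by (simp add: red algebra_simps)

lemma E10: "1 * (F f1 Xm) * (g Xp f1) + (-1/2) * (H f1 f2 Xm) + (-1/2) * (H f1 f2 Xm) * (g Xp Xm) * \<sigma> + (-1/2) * (g (br f1 f2) Xm) + (-1/2) * (g (br f1 f2) Xm) * (g Xp Xm) * \<sigma> + (1/2) * (g (br f1 Xm) f2) + (-1/2) * (g (br f1 Xm) f2) * (g Xp Xm) * \<sigma> + (1/2) * (g (br f2 Xm) f1) + (-1/2) * (g (br f2 Xm) f1) * (g Xp Xm) * \<sigma> = 0"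
  using K_G(2)[OF Pp_GT[of f1] Pn1] unfolding red0 by (simp add: red algebra_simps)

lemma E11: "(1/2) * (H f1 f2 Xm) + (1/2) * (H f1 f2 Xm) * (g Xp Xm) * \<sigma> + 1 * (g (br f2 Xm) Xm) * (g Xp f1) * \<sigma> + (1/2) * (g (br f1 f2) Xm) + (1/2) * (g (br f1 f2) Xm) * (g Xp Xm) * \<sigma> + (1/2) * (g (br f1 Xm) f2) + (-1/2) * (g (br f1 Xm) f2) * (g Xp Xm) * \<sigma> + (1/2) * (g (br f2 Xm) f1) + (-1/2) * (g (br f2 Xm) f1) * (g Xp Xm) * \<sigma> = 0"
  using K_G(1)[OF Pp_GT[of f2] Pn1] unfolding red0 by (simp add: red algebra_simps)

lemma E12: "-1 * (F f1 Xm) * (g Xp f1) + (-1/2) * (H f1 f2 Xm) + (1/2) * (H f1 f2 Xm) * (g Xp Xm) * \<sigma> + (1/2) * (g (br f1 f2) Xm) + (-1/2) * (g (br f1 f2) Xm) * (g Xp Xm) * \<sigma> + (1/2) * (g (br f1 Xm) f2) + (1/2) * (g (br f1 Xm) f2) * (g Xp Xm) * \<sigma> + (1/2) * (g (br f2 Xm) f1) + (1/2) * (g (br f2 Xm) f1) * (g Xp Xm) * \<sigma> + -1 * (g (br f1 f2) f1) * (g Xp f1) * \<sigma> = 0"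
  using N_F(2)[OF Pp_T[of f1] Pp_T[of Xm] Pm1] unfolding red0 by (simp add: red algebra_simps)

lemma E13: "-1 * (F f1 Xm) * (g Xp f1) + (1/2) * (H f1 f2 Xm) + (1/2) * (H f1 f2 Xm) * (g Xp Xm) * \<sigma> + (-1/2) * (g (br f1 f2) Xm) + (-1/2) * (g (br f1 f2) Xm) * (g Xp Xm) * \<sigma> + (-1/2) * (g (br f1 Xm) f2) + (1/2) * (g (br f1 Xm) f2) * (g Xp Xm) * \<sigma> + (-1/2) * (g (br f2 Xm) f1) + (1/2) * (g (br f2 Xm) f1) * (g Xp Xm) * \<sigma> + -1 * (g (br f1 f2) f1) * (g Xp f1) * \<sigma> = 0"
  using N_G(2)[OF Pp_GT[of f1] Pp_GT[of Xm] Pn1] unfolding red0 by (simp add: red algebra_simps)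

lemma E14: "1 * (F f2 Xm) * (g Xp f1) + 1 * (F f1 f2) * (g Xp Xm) + 1 * (F f1 f2) * (g Xp Xm) * (g Xp Xm) * \<sigma> + 1 * (F f1 f2) * (g Xp f1) * (g Xp f1) * \<sigma> + -1 * (g (br f2 Xm) f2) * (g Xp Xm) * \<sigma> + 1 * (g (br f1 f2) f2) * (g Xp f1) * \<sigma> + -1 * (g (br f1 Xm) f1) = 0"
  using N_G(1)[OF Pp_GT[of f1] Pp_GT[of Xm] Pn1] unfolding red0 by (simp add: red algebra_simps)

lemma E15: "-1 * (F f2 Xm) * (g Xp f1) + -1 * (F f1 f2) * (g Xp Xm) + 1 * (F f1 f2) * (g Xp Xm) * (g Xp Xm) * \<sigma> + 1 * (F f1 f2) * (g Xp f1) * (g Xp f1) * \<sigma> + 1 * (g (br f2 Xm) f2) * (g Xp Xm) * \<sigma> + -1 * (g (br f1 f2) f2) * (g Xp f1) * \<sigma> + -1 * (g (br f1 Xm) f1) = 0"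
  using N_F(1)[OF Pp_T[of f1] Pp_T[of Xm] Pm1] unfolding red0 by (simp add: red algebra_simps)

lemma E16: "-1 * (F f1 Xm) * (g Xp f1) * (g Xp Xm) * \<sigma> + (-1/2) * (H f1 f2 Xm) + (1/2) * (H f1 f2 Xm) * (g Xp Xm) * (g Xp Xm) * \<sigma> * \<sigma> + 1 * (g (br f2 Xm) Xm) * (g Xp f1) * (g Xp Xm) * \<sigma> * \<sigma> + (-1/2) * (g (br f1 f2) Xm) + (1/2) * (g (br f1 f2) Xm) * (g Xp Xm) * (g Xp Xm) * \<sigma> * \<sigma> + (-1/2) * (g (br f1 Xm) f2) + (1/2) * (g (br f1 Xm) f2) * (g Xp Xm) * (g Xp Xm) * \<sigma> * \<sigma> + (1/2) * (g (br f2 Xm) f1) + (-1/2) * (g (br f2 Xm) f1) * (g Xp Xm) * (g Xp Xm) * \<sigma> * \<sigma> = 0"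
  using K_F(1)[OF Pp_T[of f1] Pp_T[of f2]] unfolding red0 by (simp add: red algebra_simps)

end

lemma core:
  fixes F12 F02 F01 h c001 c101 c201 c002 c102 c202 c012 c112 c212 al be s :: real
  assumes rho: "al * al + be * be = 1" and sg: "s * s = 1"
    and E1: "1 * F12 * be + 1 * c202 + 1 * c112 * al * s = 0"
    and E2: "-1 * F12 * be + 1 * c202 + -1 * c112 * al * s = 0"
    and E3: "1 * F12 * al + -1 * c112 * be * s + 1 * c002 = 0"
    and E4: "-1 * F12 * al + 1 * c112 * be * s + 1 * c002 = 0"
    and E5: "-1 * F12 * be * be * s + -1 * F12 * al * al * s + -1 * c202 = 0"
    and E6: "-1 * c202 * al * s + 1 * c112 + 1 * c002 * be * s = 0"
    and E7: "1 * F02 * be + (1/2) * h * al * s + 1 * c212 + (1/2) * c201 * al * s + (1/2) * c102 * al * s + (1/2) * c012 * al * s = 0"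
    and E8: "1 * F02 * be + (1/2) * h * al * s + -1 * c212 + (1/2) * c201 * al * s + (1/2) * c102 * al * s + (1/2) * c012 * al * s = 0"
    and E9: "1 * F02 * al + (1/2) * h + (-1/2) * h * be * s + (1/2) * c201 + (-1/2) * c201 * be * s + (-1/2) * c102 + (-1/2) * c102 * be * s + (-1/2) * c012 + (-1/2) * c012 * be * s = 0"
    and E10: "1 * F02 * al + (-1/2) * h + (-1/2) * h * be * s + (-1/2) * c201 + (-1/2) * c201 * be * s + (1/2) * c102 + (-1/2) * c102 * be * s + (1/2) * c012 + (-1/2) * c012 * be * s = 0"
    and E11: "(1/2) * h + (1/2) * h * be * s + 1 * c212 * al * s + (1/2) * c201 + (1/2) * c201 * be * s + (1/2) * c102 + (-1/2) * c102 * be * s + (1/2) * c012 + (-1/2) * c012 * be * s = 0"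
    and E12: "-1 * F02 * al + (-1/2) * h + (1/2) * h * be * s + (1/2) * c201 + (-1/2) * c201 * be * s + (1/2) * c102 + (1/2) * c102 * be * s + (1/2) * c012 + (1/2) * c012 * be * s + -1 * c001 * al * s = 0"
    and E13: "-1 * F02 * al + (1/2) * h + (1/2) * h * be * s + (-1/2) * c201 + (-1/2) * c201 * be * s + (-1/2) * c102 + (1/2) * c102 * be * s + (-1/2) * c012 + (1/2) * c012 * be * s + -1 * c001 * al * s = 0"
    and E14: "1 * F12 * al + 1 * F01 * be + 1 * F01 * be * be * s + 1 * F01 * al * al * s + -1 * c112 * be * s + 1 * c101 * al * s + -1 * c002 = 0"
    and E15: "-1 * F12 * al + -1 * F01 * be + 1 * F01 * be * be * s + 1 * F01 * al * al * s + 1 * c112 * be * s + -1 * c101 * al * s + -1 * c002 = 0"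
    and E16: "-1 * F02 * al * be * s + (-1/2) * h + (1/2) * h * be * be * s * s + 1 * c212 * al * be * s * s + (-1/2) * c201 + (1/2) * c201 * be * be * s * s + (-1/2) * c102 + (1/2) * c102 * be * be * s * s + (1/2) * c012 + (-1/2) * c012 * be * be * s * s = 0"
  shows "F12 = 0" "F02 = 0" "F01 = 0" "h = 0" "c202 = 0" "c002 = 0" "c112 = 0" "c212 = 0"
    "c201 = 0" "c012 = - c102" "al * c001 = 0" "al * c101 = 0" "al * c102 = 0"
proof -
  have c202: "c202 = 0" using E1 E2 by linarith
  have c002: "c002 = 0" using E3 E4 by linarith
  have "F12 * s * (al*al+be*be) = 0" using E5 c202 by algebra
  hence "F12 * s = 0" using rho by simp
  hence F12: "F12 = 0" using sg by algebra
  have x1: "c112 * al * s = 0" using E1 c202 F12 by simp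
  have x2: "c112 * be * s = 0" using E3 c002 F12 by simp
  have c112: "c112 = 0" using x1 x2 rho sg by algebra
  have c212: "c212 = 0" using E7 E8 by linarith
  have a1: "h + c201 - c102 - c012 = 0" using E9 E10 by linarith
  have a2: "h + c201 + c102 + c012 = 0" using E11 a1 c212 by algebra
  have hc: "c201 = - h" "c012 = - c102" using a1 a2 by linarith+
  have F02b: "F02 * be = 0" using E7 a2 c212 by algebra
  have F02a: "F02 * al = 0" using E9 E10 a1 a2 by algebra
  have F02: "F02 = 0" using F02a F02b rho by algebra
  have h: "h = 0" using E12 E13 hc by linarith
  have "c001 * al * s = 0" using E12 E13 hc h F02 by algebra
  hence c001: "al * c001 = 0" using sg by algebra
  have "F01 * s * (al * al + be * be) = 0" using E14 E15 c002 by algebra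
  hence "F01 * s = 0" using rho by simp
  hence F01: "F01 = 0" using sg by algebra
  have "c101 * al * s = 0" using E14 E15 F12 F01 c112 by algebra
  hence c101: "al * c101 = 0" using sg by algebra
  have "al * (al * c102) = 0" using E16 hc h F02 c212 sg rho by algebra
  hence c102: "al * c102 = 0" by simp
  show "F12 = 0" "F02 = 0" "F01 = 0" "h = 0" "c202 = 0" "c002 = 0" "c112 = 0" "c212 = 0"
    "c201 = 0" "c012 = - c102" "al * c001 = 0" "al * c101 = 0" "al * c102 = 0"
    using F12 F02 F01 h c202 c002 c112 c212 hc c001 c101 c102 by simp_all
qed


definition concl :: "(real^3 \<Rightarrow> real^3 \<Rightarrow> real^3) \<Rightarrow> real^3^3 \<Rightarrow> real^3 \<Rightarrow> real^3 \<Rightarrow> bool" where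
 "concl br G Xp Xm \<longleftrightarrow> (\<exists>\<mu>::real. \<mu> \<noteq> 0 \<and>
      (let G' = (\<mu>^2) *\<^sub>R G; Xp' = (1/\<mu>) *\<^sub>R Xp; Xm' = (1/\<mu>) *\<^sub>R Xm in
        (\<exists>w1 w2 w3.
           gmet G' w1 w1 = 1 \<and> gmet G' w2 w2 = 1 \<and> gmet G' w3 w3 = 1 \<and>
           gmet G' w1 w2 = 0 \<and> gmet G' w1 w3 = 0 \<and> gmet G' w2 w3 = 0 \<and>
           br w1 w2 = w3 \<and> br w2 w3 = w1 \<and> br w3 w1 = 0 \<and>
           Xm' = w2 \<and> (Xp' = Xm' \<or> Xp' = - Xm'))
      \<or> (\<exists>w1 w2 w3 \<delta>. \<delta> \<noteq> 0 \<and>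
           gmet G' w1 w1 = 1 / \<delta>^2 \<and> gmet G' w2 w2 = 1 \<and> gmet G' w3 w3 = 1 \<and>
           gmet G' w1 w2 = 0 \<and> gmet G' w1 w3 = 0 \<and> gmet G' w2 w3 = 0 \<and>
           br w1 w2 = w2 \<and> br w1 w3 = 0 \<and> br w2 w3 = 0 \<and>
           Xm' = w3 \<and> (Xp' = Xm' \<or> Xp' = - Xm'))
      \<or> abelian br))"

lemma gmet_scaleR: "gmet (r *\<^sub>R G) x y = r * gmet G x y"
proof -
  have "(r *\<^sub>R G) *v y = r *\<^sub>R (G *v y)"
    by (simp add: matrix_vector_mult_def vec_eq_iff sum_distrib_left algebra_simps)
  then show ?thesis by (simp add: gmet_def)
qed

context S2 begin

definition "ca = g (br f1 f2) f1"
definition "cb = g (br f1 f2) f2"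
definition "cc = g (br f1 Xm) f2"

lemmas A = core[OF rho sg E1 E2 E3 E4 E5 E6 E7 E8 E9 E10 E11 E12 E13 E14 E15 E16]

lemma brv: "br f1 f2 = ca *\<^sub>R f1 + cb *\<^sub>R f2" "br f1 Xm = cc *\<^sub>R f2" "br f2 Xm = (- cc) *\<^sub>R f1"
proof -
  have "br f1 f2 = ca *\<^sub>R f1 + cb *\<^sub>R f2 + 0 *\<^sub>R Xm" by (rule expand_eq) (simp_all add: A ca_def cb_def cc_def)
  then show "br f1 f2 = ca *\<^sub>R f1 + cb *\<^sub>R f2" by simp
  have "br f1 Xm = 0 *\<^sub>R f1 + cc *\<^sub>R f2 + 0 *\<^sub>R Xm" by (rule expand_eq) (simp_all add: A ca_def cb_def cc_def)
  then show "br f1 Xm = cc *\<^sub>R f2" by simp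
  have "br f2 Xm = (- cc) *\<^sub>R f1 + 0 *\<^sub>R f2 + 0 *\<^sub>R Xm" by (rule expand_eq) (simp_all add: A ca_def cb_def cc_def)
  then show "br f2 Xm = (- cc) *\<^sub>R f1" by simp
qed

lemma H_all: "H x y z = 0"
proof -
  obtain a1 b1 c1 where x: "x = a1 *\<^sub>R f1 + b1 *\<^sub>R f2 + c1 *\<^sub>R Xm" using expand0 by blast
  obtain a2 b2 c2 where y: "y = a2 *\<^sub>R f1 + b2 *\<^sub>R f2 + c2 *\<^sub>R Xm" using expand0 by blast
  obtain a3 b3 c3 where z: "z = a3 *\<^sub>R f1 + b3 *\<^sub>R f2 + c3 *\<^sub>R Xm" using expand0 by blast
  show ?thesis unfolding x y z by (simp add: H_lin Hn A)
qed

lemma F_all: "F x y = 0"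
proof -
  obtain a1 b1 c1 where x: "x = a1 *\<^sub>R f1 + b1 *\<^sub>R f2 + c1 *\<^sub>R Xm" using expand0 by blast
  obtain a2 b2 c2 where y: "y = a2 *\<^sub>R f1 + b2 *\<^sub>R f2 + c2 *\<^sub>R Xm" using expand0 by blast
  show ?thesis unfolding x y by (simp add: F_lin Fn A)
qed

lemma abel: assumes "ca = 0" "cb = 0" "cc = 0" shows "abelian br"
  unfolding abelian_def
proof (intro allI)
  fix x y
  obtain a1 b1 c1 where x: "x = a1 *\<^sub>R f1 + b1 *\<^sub>R f2 + c1 *\<^sub>R Xm" using expand0 by blast
  obtain a2 b2 c2 where y: "y = a2 *\<^sub>R f1 + b2 *\<^sub>R f2 + c2 *\<^sub>R Xm" using expand0 by blast
  show "br x y = 0" unfolding x y using assms by (simp add: br_lin brn brv)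
qed

lemma jac: "cc * ca = 0" "cc * cb = 0"
proof -
  have J: "br f1 (br f2 Xm) + br f2 (br Xm f1) + br Xm (br f1 f2) = 0" by (rule jacobi)
  have "g (br f1 (br f2 Xm) + br f2 (br Xm f1) + br Xm (br f1 f2)) f1 = 0"
       "g (br f1 (br f2 Xm) + br f2 (br Xm f1) + br Xm (br f1 f2)) f2 = 0" using J by (simp_all add: gmet_lin)
  then show "cc * ca = 0" "cc * cb = 0"
    by (simp_all add: brv brn br_lin gmet_lin gfr algebra_simps)
qed

end

context S2 begin

lemma A2: "g Xp f1 * ca = 0" "g Xp f1 * cb = 0" "g Xp f1 * cc = 0"
  using A(11,12,13) unfolding ca_def cb_def cc_def by auto

lemma Xp_pm: assumes al: "g Xp f1 = 0" shows "Xp = Xm \<or> Xp = - Xm"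
proof -
  have e: "Xp = 0 *\<^sub>R f1 + 0 *\<^sub>R f2 + g Xp Xm *\<^sub>R Xm" by (rule expand_eq) (simp_all add: al gfr)
  have be: "g Xp Xm = 1 \<or> g Xp Xm = -1" using rho al
    by (metis mult_zero_left add_0 square_eq_1_iff)
  then show ?thesis
  proof
    assume "g Xp Xm = 1"
    then have "Xp = 0 *\<^sub>R f1 + 0 *\<^sub>R f2 + 1 *\<^sub>R Xm" using e by metis
    then show ?thesis by simp
  next
    assume "g Xp Xm = -1"
    then have "Xp = 0 *\<^sub>R f1 + 0 *\<^sub>R f2 + (-1) *\<^sub>R Xm" using e by metis
    then show ?thesis by simp
  qed
qed

lemma caseIII: assumes "ca = 0" "cb = 0" "cc = 0" shows "concl br G Xp Xm"
  unfolding concl_def Let_def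
  apply (rule exI[of _ 1])
  using abel[OF assms] by simp

lemma caseI: assumes c: "cc \<noteq> 0" and al: "g Xp f1 = 0" shows "concl br G Xp Xm"
proof -
  have ab: "ca = 0" "cb = 0" using jac c by auto
  define w1 where "w1 = (1/cc) *\<^sub>R f1"
  define w2 where "w2 = (1/cc) *\<^sub>R Xm"
  define w3 where "w3 = (1/cc) *\<^sub>R f2"
  let ?G = "(cc^2) *\<^sub>R G"
  have gg: "gmet ?G w1 w1 = 1" "gmet ?G w2 w2 = 1" "gmet ?G w3 w3 = 1"
    "gmet ?G w1 w2 = 0" "gmet ?G w1 w3 = 0" "gmet ?G w2 w3 = 0"
    unfolding w1_def w2_def w3_def using c
    by (simp_all add: gmet_scaleR gmet_lin gfr power2_eq_square)
  have bb: "br w1 w2 = w3" "br w2 w3 = w1" "br w3 w1 = 0"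
    unfolding w1_def w2_def w3_def using c ab
    by (simp_all add: br_lin brn brv)
  have xm: "(1/cc) *\<^sub>R Xm = w2" unfolding w2_def ..
  have xp: "(1/cc) *\<^sub>R Xp = (1/cc) *\<^sub>R Xm \<or> (1/cc) *\<^sub>R Xp = - ((1/cc) *\<^sub>R Xm)"
    using Xp_pm[OF al] by auto
  show ?thesis
    unfolding concl_def Let_def
    apply (rule exI[of _ cc])
    apply (rule conjI, rule c)
    apply (rule disjI1)
    apply (rule exI[of _ w1], rule exI[of _ w2], rule exI[of _ w3])
    using gg bb xm xp by simp
qed

lemma caseII: assumes c: "cc = 0" and nz: "ca \<noteq> 0 \<or> cb \<noteq> 0" and al: "g Xp f1 = 0"
  shows "concl br G Xp Xm"
proof -
  define r where "r = sqrt (ca * ca + cb * cb)"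
  have pos: "ca * ca + cb * cb > 0" using nz
    by (simp add: sum_squares_gt_zero_iff)
  have r0: "r > 0" unfolding r_def using pos by simp
  have rr: "r * r = ca * ca + cb * cb" unfolding r_def using pos
    by (simp add: real_sqrt_mult_self)
  define w1 where "w1 = (1/(r*r)) *\<^sub>R (cb *\<^sub>R f1 - ca *\<^sub>R f2)"
  define w2 where "w2 = (1/r) *\<^sub>R (ca *\<^sub>R f1 + cb *\<^sub>R f2)"
  define w3 where "w3 = Xm"
  have rn: "r \<noteq> 0" using r0 by simp
  have g11: "g w1 w1 = (1/(r*r)) * (1/(r*r)) * (ca*ca + cb*cb)"
    unfolding w1_def by (simp add: gmet_lin gfr algebra_simps)
  have g22: "g w2 w2 = (1/r) * (1/r) * (ca*ca + cb*cb)"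
    unfolding w2_def by (simp add: gmet_lin gfr algebra_simps)
  have gg: "g w1 w1 = 1 / r^2" "g w2 w2 = 1" "g w3 w3 = 1"
    "g w1 w2 = 0" "g w1 w3 = 0" "g w2 w3 = 0"
  proof -
    show "g w1 w1 = 1 / r^2" unfolding g11 rr[symmetric] using rn by (simp add: power2_eq_square)
    show "g w2 w2 = 1" unfolding g22 rr[symmetric] using rn by simp
    show "g w3 w3 = 1" "g w1 w3 = 0" "g w2 w3 = 0" unfolding w1_def w2_def w3_def
      by (simp_all add: gmet_lin gfr)
    show "g w1 w2 = 0" unfolding w1_def w2_def by (simp add: gmet_lin gfr algebra_simps)
  qed
  have b12: "br w1 w2 = ((1/(r*r)) * (1/r) * (ca*ca + cb*cb)) *\<^sub>R (ca *\<^sub>R f1 + cb *\<^sub>R f2)"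
    unfolding w1_def w2_def by (simp add: br_lin brn brv algebra_simps)
  have bb1: "br w1 w2 = w2"
    unfolding b12 unfolding w2_def rr[symmetric] using rn by simp
  have bb: "br w1 w3 = 0" "br w2 w3 = 0"
    unfolding w1_def w2_def w3_def using c
    by (simp_all add: br_lin brn brv)
  have xp: "Xp = Xm \<or> Xp = - Xm" using Xp_pm[OF al] .
  show ?thesis
    unfolding concl_def Let_def
    apply (rule exI[of _ 1])
    apply (rule conjI, simp)
    apply (rule disjI2, rule disjI1)
    apply (rule exI[of _ w1], rule exI[of _ w2], rule exI[of _ w3], rule exI[of _ r])
    using gg bb1 bb xp r0 w3_def by simp
qed

lemma final: "concl br G Xp Xm"
proof (cases "ca = 0 \<and> cb = 0 \<and> cc = 0")
  case True then show ?thesis using caseIII by blast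
next
  case False
  then have al: "g Xp f1 = 0" using A2 by auto
  show ?thesis
  proof (cases "cc = 0")
    case True
    then show ?thesis using caseII[OF True _ al] False by blast
  next
    case False
    then show ?thesis using caseI[OF False al] by blast
  qed
qed

end
context S begin

lemma perp_ex: "\<exists>y. y \<noteq> 0 \<and> g Xm y = 0"
proof -
  define w where "w = G *v Xm"
  have gw: "g Xm y = y \<bullet> w" for y unfolding w_def using gsym[of Xm y] by (simp add: gmet_def)
  show ?thesis
  proof (cases "w$1 = 0 \<and> w$2 = 0")
    case True
    have "axis 1 (1::real) \<noteq> (0::real^3)" by (simp add: vec_eq_iff axis_def)
    moreover have "g Xm (axis 1 1) = 0" using True by (simp add: gw inner_commute inner_axis)
    ultimately show ?thesis by blast
  next
    case False
    define y where "y = (vector [-(w$2), w$1, 0] :: real^3)"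
    have "y \<noteq> 0"
    proof
      assume "y = 0"
      then have "y$1 = 0" "y$2 = 0" by simp_all
      then show False using False unfolding y_def by simp
    qed
    moreover have "g Xm y = 0" unfolding gw y_def by (simp add: inner_vec_def sum_3)
    ultimately show ?thesis by blast
  qed
qed

lemma normalize: assumes "y \<noteq> 0" "g Xm y = 0"
  shows "\<exists>f k. g Xm f = 0 \<and> g f f = 1 \<and> f = k *\<^sub>R y"
proof -
  have q: "g y y > 0" using pd assms(1) unfolding pos_def_def by blast
  define k where "k = 1 / sqrt (g y y)"
  have "k * k * g y y = 1" unfolding k_def using q
    by (simp add: field_simps real_sqrt_mult_self)
  then have "g Xm (k *\<^sub>R y) = 0 \<and> g (k *\<^sub>R y) (k *\<^sub>R y) = 1" using assms(2)
    by (simp add: gmet_lin algebra_simps)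
  then show ?thesis by blast
qed

lemma frame_ex: "\<exists>f1. g Xm f1 = 0 \<and> g f1 f1 = 1 \<and> g Xp (Jm *v f1) = 0"
proof -
  define v where "v = Xp - g Xp Xm *\<^sub>R Xm"
  have gv: "g Xm v = 0" unfolding v_def using Xmu gsym[of Xm Xp] by (simp add: gmet_lin)
  have zm: "g x (Jm *v x) = 0" for x using skm[of x x] gsym[of x "Jm *v x"] by simp
  show ?thesis
  proof (cases "v = 0")
    case False
    obtain f k where f: "g Xm f = 0" "g f f = 1" "f = k *\<^sub>R v" using normalize[OF False gv] by blast
    have "Jm *v v = Jm *v Xp" unfolding v_def by (simp add: mv_lin JXm)
    then have "g Xp (Jm *v f) = 0" unfolding f(3) using zm[of Xp] by (simp add: mv_lin gmet_lin)
    then show ?thesis using f by blast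
  next
    case True
    have b: "Xp = g Xp Xm *\<^sub>R Xm" using True unfolding v_def by (metis right_minus_eq)
    obtain b where b': "Xp = b *\<^sub>R Xm" using b by blast
    obtain y where y: "y \<noteq> 0" "g Xm y = 0" using perp_ex by blast
    obtain f k where f: "g Xm f = 0" "g f f = 1" "f = k *\<^sub>R y" using normalize[OF y] by blast
    have "g Xm (Jm *v f) = 0" using skm[of Xm f] JXm f(1) by (simp add: gmet_lin)
    then have "g Xp (Jm *v f) = 0" unfolding b' by (simp add: gmet_lin)
    then show ?thesis using f by blast
  qed
qed

lemma main_S: "(\<forall>x y z. H x y z = 0) \<and> (\<forall>x y. F x y = 0) \<and> concl br G Xp Xm"
proof -
  obtain f1 where f: "g Xm f1 = 0" "g f1 f1 = 1" "g Xp (Jm *v f1) = 0" using frame_ex by blast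
  interpret S1 br H F G Jp Jm Xp Xm f1 "Jm *v f1"
    by unfold_locales (use f in auto)
  obtain \<sigma> where s: "\<sigma> * \<sigma> = 1" "Jp *v f1 = (\<sigma> * g Xp Xm) *\<^sub>R (Jm *v f1)"
    "Jp *v (Jm *v f1) = (- \<sigma> * g Xp Xm) *\<^sub>R f1 + (\<sigma> * g Xp f1) *\<^sub>R Xm"
    "Jp *v Xm = (- \<sigma> * g Xp f1) *\<^sub>R (Jm *v f1)" using jp_frame by blast
  interpret S2 br H F G Jp Jm Xp Xm f1 "Jm *v f1" \<sigma>
    by unfold_locales (use s in auto)
  show ?thesis using H_all F_all final by blast
qed

end

theorem corollary7p5:
  fixes br :: "real^3 \<Rightarrow> real^3 \<Rightarrow> real^3"
    and H :: "real^3 \<Rightarrow> real^3 \<Rightarrow> real^3 \<Rightarrow> real"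
    and F :: "real^3 \<Rightarrow> real^3 \<Rightarrow> real"
    and G Jp Jm :: "real^3^3" and Xp Xm :: "real^3"
  assumes "lie_algebra br"
    and "courant_data br H F"
    and "component_data G Jp Jm Xp Xm"
    and "pos_def G"
    and "gen_pseudo_kaehler br H F G Jp Jm Xp"
  shows "(\<forall>x y z. H x y z = 0) \<and> (\<forall>x y. F x y = 0) \<and>
    (\<forall>J\<in>{Jp, Jm}. \<forall>x y. gmet G (J *v x) y = - gmet G x (J *v y)) \<and>
    Jp *v Xp = 0 \<and> Jm *v Xm = 0 \<and>
    (\<forall>y. gmet G Xp y = 0 \<longrightarrow> Jp *v (Jp *v y) = - y) \<and>
    (\<forall>y. gmet G Xm y = 0 \<longrightarrow> Jm *v (Jm *v y) = - y) \<and>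
    (\<exists>\<mu>::real. \<mu> \<noteq> 0 \<and>
      (let G' = (\<mu>^2) *\<^sub>R G; Xp' = (1/\<mu>) *\<^sub>R Xp; Xm' = (1/\<mu>) *\<^sub>R Xm in
        (\<exists>w1 w2 w3.
           gmet G' w1 w1 = 1 \<and> gmet G' w2 w2 = 1 \<and> gmet G' w3 w3 = 1 \<and>
           gmet G' w1 w2 = 0 \<and> gmet G' w1 w3 = 0 \<and> gmet G' w2 w3 = 0 \<and>
           br w1 w2 = w3 \<and> br w2 w3 = w1 \<and> br w3 w1 = 0 \<and>
           Xm' = w2 \<and> (Xp' = Xm' \<or> Xp' = - Xm'))
      \<or> (\<exists>w1 w2 w3 \<delta>. \<delta> \<noteq> 0 \<and>
           gmet G' w1 w1 = 1 / \<delta>^2 \<and> gmet G' w2 w2 = 1 \<and> gmet G' w3 w3 = 1 \<and>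
           gmet G' w1 w2 = 0 \<and> gmet G' w1 w3 = 0 \<and> gmet G' w2 w3 = 0 \<and>
           br w1 w2 = w2 \<and> br w1 w3 = 0 \<and> br w2 w3 = 0 \<and>
           Xm' = w3 \<and> (Xp' = Xm' \<or> Xp' = - Xm'))
      \<or> abelian br))"
proof -
  interpret S br H F G Jp Jm Xp Xm using assms by unfold_locales
  have m: "(\<forall>x y z. H x y z = 0) \<and> (\<forall>x y. F x y = 0) \<and> concl br G Xp Xm" by (rule main_S)
  have c: "(\<forall>J\<in>{Jp, Jm}. \<forall>x y. gmet G (J *v x) y = - gmet G x (J *v y)) \<and>
    Jp *v Xp = 0 \<and> Jm *v Xm = 0 \<and>
    (\<forall>y. gmet G Xp y = 0 \<longrightarrow> Jp *v (Jp *v y) = - y) \<and>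
    (\<forall>y. gmet G Xm y = 0 \<longrightarrow> Jm *v (Jm *v y) = - y)"
    using assms(3) unfolding component_data_def by blast
  show ?thesis using m c unfolding concl_def by blast
qed

end
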